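(* (1) If $U[-1]\to A\overset{f}{\to}B\to U$ is a distinguished triangle in $\mathscr{C}$ with $U\in\mathcal{U}$, then $A\in\mathscr{C}^-$ implies $B\in\mathscr{C}^-$. (2) If $S[-1]\to A\overset{f}{\to}B\to S$ is a distinguished triangle in $\mathscr{C}$ with $S\in\mathcal{S}$, then $B\in\mathscr{C}^-$ implies $A\in\mathscr{C}^-$.
   Context: $\mathscr{C}$ is a triangulated category with shift $[1]$; subcategories are full, additive, closed under isomorphisms and direct summands. $\mathrm{Ext}^1(X,Y)=\mathscr{C}(X,Y[1])$. $\mathcal{M}\ast\mathcal{N}$ is the full subcategory of objects $C$ admitting a distinguished triangle $M\to C\to N\to M[1]$ with $M\in\mathcal{M}$, $N\in\mathcal{N}$. A cotorsion pair $(\mathcal{U},\mathcal{V})$: $\mathrm{Ext}^1(\mathcal{U},\mathcal{V})=0$ and $\mathscr{C}=\mathcal{U}\ast\mathcal{V}[1]$. Fix a twin cotorsion pair, i.e. cotorsion pairs $(\mathcal{S},\mathcal{T}),(\mathcal{U},\mathcal{V})$ with $\mathrm{Ext}^1(\mathcal{S},\mathcal{V})=0$. Put $\mathcal{W}=\mathcal{T}\cap\mathcal{U}$ and $\mathscr{C}^-=\mathcal{S}[-1]\ast\mathcal{W}$. *)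

theory Defs
  imports Main
begin

text \<open>A triangulated category, encoded by its objects (type 'o), morphisms (type 'm),
  hom-sets, composition (Comp g f = g after f), identities, abelian-group structure on
  hom-sets, the shift functor [1] on objects and morphisms, and the class of
  distinguished triangles  X -f-> Y -g-> Z -h-> X[1].\<close>

record ('o, 'm) tricat =
  Hom  :: "'o \<Rightarrow> 'o \<Rightarrow> 'm set"
  Comp :: "'m \<Rightarrow> 'm \<Rightarrow> 'm"
  Idm  :: "'o \<Rightarrow> 'm"
  Zer  :: "'o \<Rightarrow> 'o \<Rightarrow> 'm"
  Add  :: "'m \<Rightarrow> 'm \<Rightarrow> 'm"
  Neg  :: "'m \<Rightarrow> 'm"
  Sh   :: "'o \<Rightarrow> 'o"
  ShM  :: "'m \<Rightarrow> 'm"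
  Dist :: "'o \<Rightarrow> 'o \<Rightarrow> 'o \<Rightarrow> 'm \<Rightarrow> 'm \<Rightarrow> 'm \<Rightarrow> bool"

definition is_iso :: "('o,'m) tricat \<Rightarrow> 'o \<Rightarrow> 'o \<Rightarrow> 'm \<Rightarrow> bool" where
  "is_iso C X Y f \<longleftrightarrow> f \<in> Hom C X Y \<and>
     (\<exists>g \<in> Hom C Y X. Comp C g f = Idm C X \<and> Comp C f g = Idm C Y)"

definition iso_obj :: "('o,'m) tricat \<Rightarrow> 'o \<Rightarrow> 'o \<Rightarrow> bool" where
  "iso_obj C X Y \<longleftrightarrow> (\<exists>f. is_iso C X Y f)"

definition is_zero_obj :: "('o,'m) tricat \<Rightarrow> 'o \<Rightarrow> bool" where
  "is_zero_obj C Z \<longleftrightarrow> (\<forall>X. (\<exists>!f. f \<in> Hom C Z X) \<and> (\<exists>!f. f \<in> Hom C X Z))"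

definition is_biprod :: "('o,'m) tricat \<Rightarrow> 'o \<Rightarrow> 'o \<Rightarrow> 'o \<Rightarrow> bool" where
  "is_biprod C X Y P \<longleftrightarrow> (\<exists>i1 \<in> Hom C X P. \<exists>i2 \<in> Hom C Y P. \<exists>p1 \<in> Hom C P X. \<exists>p2 \<in> Hom C P Y.
     Comp C p1 i1 = Idm C X \<and> Comp C p2 i2 = Idm C Y \<and>
     Comp C p1 i2 = Zer C Y X \<and> Comp C p2 i1 = Zer C X Y \<and>
     Add C (Comp C i1 p1) (Comp C i2 p2) = Idm C P)"

definition additive_cat :: "('o,'m) tricat \<Rightarrow> bool" where
  "additive_cat C \<longleftrightarrow>
    (\<forall>X Y X' Y'. \<forall>f. f \<in> Hom C X Y \<longrightarrow> f \<in> Hom C X' Y' \<longrightarrow> X = X' \<and> Y = Y') \<and>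
    (\<forall>X Y Z f g. f \<in> Hom C X Y \<longrightarrow> g \<in> Hom C Y Z \<longrightarrow> Comp C g f \<in> Hom C X Z) \<and>
    (\<forall>W X Y Z f g h. f \<in> Hom C W X \<longrightarrow> g \<in> Hom C X Y \<longrightarrow> h \<in> Hom C Y Z \<longrightarrow>
        Comp C h (Comp C g f) = Comp C (Comp C h g) f) \<and>
    (\<forall>X. Idm C X \<in> Hom C X X) \<and>
    (\<forall>X Y f. f \<in> Hom C X Y \<longrightarrow> Comp C (Idm C Y) f = f \<and> Comp C f (Idm C X) = f) \<and>
    (\<forall>X Y. Zer C X Y \<in> Hom C X Y) \<and>
    (\<forall>X Y f g. f \<in> Hom C X Y \<longrightarrow> g \<in> Hom C X Y \<longrightarrow> Add C f g \<in> Hom C X Y) \<and>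
    (\<forall>X Y f. f \<in> Hom C X Y \<longrightarrow> Neg C f \<in> Hom C X Y) \<and>
    (\<forall>X Y f g h. f \<in> Hom C X Y \<longrightarrow> g \<in> Hom C X Y \<longrightarrow> h \<in> Hom C X Y \<longrightarrow>
        Add C (Add C f g) h = Add C f (Add C g h)) \<and>
    (\<forall>X Y f g. f \<in> Hom C X Y \<longrightarrow> g \<in> Hom C X Y \<longrightarrow> Add C f g = Add C g f) \<and>
    (\<forall>X Y f. f \<in> Hom C X Y \<longrightarrow> Add C f (Zer C X Y) = f) \<and>
    (\<forall>X Y f. f \<in> Hom C X Y \<longrightarrow> Add C f (Neg C f) = Zer C X Y) \<and>
    (\<forall>X Y Z f f' g. f \<in> Hom C X Y \<longrightarrow> f' \<in> Hom C X Y \<longrightarrow> g \<in> Hom C Y Z \<longrightarrow>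
        Comp C g (Add C f f') = Add C (Comp C g f) (Comp C g f')) \<and>
    (\<forall>X Y Z f g g'. f \<in> Hom C X Y \<longrightarrow> g \<in> Hom C Y Z \<longrightarrow> g' \<in> Hom C Y Z \<longrightarrow>
        Comp C (Add C g g') f = Add C (Comp C g f) (Comp C g' f)) \<and>
    (\<exists>Z. is_zero_obj C Z) \<and>
    (\<forall>X Y. \<exists>P. is_biprod C X Y P)"

definition shift_autoequiv :: "('o,'m) tricat \<Rightarrow> bool" where
  "shift_autoequiv C \<longleftrightarrow>
    (\<forall>X Y f. f \<in> Hom C X Y \<longrightarrow> ShM C f \<in> Hom C (Sh C X) (Sh C Y)) \<and>
    (\<forall>X. ShM C (Idm C X) = Idm C (Sh C X)) \<and>
    (\<forall>X Y Z f g. f \<in> Hom C X Y \<longrightarrow> g \<in> Hom C Y Z \<longrightarrow> ShM C (Comp C g f) = Comp C (ShM C g) (ShM C f)) \<and>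
    (\<forall>X Y f g. f \<in> Hom C X Y \<longrightarrow> g \<in> Hom C X Y \<longrightarrow> ShM C (Add C f g) = Add C (ShM C f) (ShM C g)) \<and>
    (\<forall>X Y. bij_betw (ShM C) (Hom C X Y) (Hom C (Sh C X) (Sh C Y))) \<and>
    (\<forall>Y. \<exists>X. iso_obj C (Sh C X) Y)"

definition is_triangle :: "('o,'m) tricat \<Rightarrow> 'o \<Rightarrow> 'o \<Rightarrow> 'o \<Rightarrow> 'm \<Rightarrow> 'm \<Rightarrow> 'm \<Rightarrow> bool" where
  "is_triangle C X Y Z f g h \<longleftrightarrow> f \<in> Hom C X Y \<and> g \<in> Hom C Y Z \<and> h \<in> Hom C Z (Sh C X)"

definition triangulated :: "('o,'m) tricat \<Rightarrow> bool" where
  "triangulated C \<longleftrightarrow> additive_cat C \<and> shift_autoequiv C \<and>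
    (\<forall>X Y Z f g h. Dist C X Y Z f g h \<longrightarrow> is_triangle C X Y Z f g h) \<and>
    \<comment> \<open>TR1: closure under isomorphisms of triangles\<close>
    (\<forall>X Y Z f g h X' Y' Z' f' g' h' a b c.
        Dist C X Y Z f g h \<longrightarrow> is_triangle C X' Y' Z' f' g' h' \<longrightarrow>
        is_iso C X X' a \<longrightarrow> is_iso C Y Y' b \<longrightarrow> is_iso C Z Z' c \<longrightarrow>
        Comp C b f = Comp C f' a \<longrightarrow> Comp C c g = Comp C g' b \<longrightarrow>
        Comp C (ShM C a) h = Comp C h' c \<longrightarrow> Dist C X' Y' Z' f' g' h') \<and>
    \<comment> \<open>TR1: X -id-> X -> 0 -> X[1] is distinguished\<close>
    (\<forall>X Z. is_zero_obj C Z \<longrightarrow> Dist C X X Z (Idm C X) (Zer C X Z) (Zer C Z (Sh C X))) \<and>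
    \<comment> \<open>TR1: every morphism extends to a distinguished triangle\<close>
    (\<forall>X Y f. f \<in> Hom C X Y \<longrightarrow> (\<exists>Z g h. Dist C X Y Z f g h)) \<and>
    \<comment> \<open>TR2: rotation\<close>
    (\<forall>X Y Z f g h. is_triangle C X Y Z f g h \<longrightarrow>
        (Dist C X Y Z f g h \<longleftrightarrow> Dist C Y Z (Sh C X) g h (Neg C (ShM C f)))) \<and>
    \<comment> \<open>TR3: morphism completion\<close>
    (\<forall>X Y Z f g h X' Y' Z' f' g' h' a b.
        Dist C X Y Z f g h \<longrightarrow> Dist C X' Y' Z' f' g' h' \<longrightarrow>
        a \<in> Hom C X X' \<longrightarrow> b \<in> Hom C Y Y' \<longrightarrow> Comp C b f = Comp C f' a \<longrightarrow>
        (\<exists>c \<in> Hom C Z Z'. Comp C c g = Comp C g' b \<and> Comp C (ShM C a) h = Comp C h' c)) \<and>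
    \<comment> \<open>TR4: octahedral axiom\<close>
    (\<forall>X Y Z Z' X' Y' f g p q r s t w.
        Dist C X Y Z' f p q \<longrightarrow> Dist C Y Z X' g r s \<longrightarrow> Dist C X Z Y' (Comp C g f) t w \<longrightarrow>
        (\<exists>u \<in> Hom C Z' Y'. \<exists>v \<in> Hom C Y' X'.
            Dist C Z' Y' X' u v (Comp C (ShM C p) s) \<and>
            Comp C u p = Comp C t g \<and> Comp C w u = q \<and>
            Comp C v t = r \<and> Comp C s v = Comp C (ShM C f) w))"

text \<open>Subcategories: full, additive, closed under isomorphisms and direct summands;
  identified with predicates on objects.\<close>
definition subcat :: "('o,'m) tricat \<Rightarrow> ('o \<Rightarrow> bool) \<Rightarrow> bool" where
  "subcat C P \<longleftrightarrow>
    (\<forall>X Y. P X \<longrightarrow> iso_obj C X Y \<longrightarrow> P Y) \<and>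
    (\<forall>Z. is_zero_obj C Z \<longrightarrow> P Z) \<and>
    (\<forall>X Y S. is_biprod C X Y S \<longrightarrow> P X \<longrightarrow> P Y \<longrightarrow> P S) \<and>
    (\<forall>X Y S. is_biprod C X Y S \<longrightarrow> P S \<longrightarrow> P X \<and> P Y)"

text \<open>Ext^1(M,N) = 0, where Ext^1(X,Y) = C(X, Y[1]).\<close>
definition ext1_zero :: "('o,'m) tricat \<Rightarrow> ('o \<Rightarrow> bool) \<Rightarrow> ('o \<Rightarrow> bool) \<Rightarrow> bool" where
  "ext1_zero C M N \<longleftrightarrow> (\<forall>X Y. M X \<longrightarrow> N Y \<longrightarrow> Hom C X (Sh C Y) = {Zer C X (Sh C Y)})"

definition ostar :: "('o,'m) tricat \<Rightarrow> ('o \<Rightarrow> bool) \<Rightarrow> ('o \<Rightarrow> bool) \<Rightarrow> 'o \<Rightarrow> bool" where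
  "ostar C M N A \<longleftrightarrow> (\<exists>X Y f g h. M X \<and> N Y \<and> Dist C X A Y f g h)"

definition shift_up :: "('o,'m) tricat \<Rightarrow> ('o \<Rightarrow> bool) \<Rightarrow> 'o \<Rightarrow> bool" where
  "shift_up C N Y \<longleftrightarrow> (\<exists>X. N X \<and> iso_obj C (Sh C X) Y)"

definition shift_down :: "('o,'m) tricat \<Rightarrow> ('o \<Rightarrow> bool) \<Rightarrow> 'o \<Rightarrow> bool" where
  "shift_down C N X \<longleftrightarrow> N (Sh C X)"

definition cotorsion_pair :: "('o,'m) tricat \<Rightarrow> ('o \<Rightarrow> bool) \<Rightarrow> ('o \<Rightarrow> bool) \<Rightarrow> bool" where
  "cotorsion_pair C U V \<longleftrightarrow> subcat C U \<and> subcat C V \<and> ext1_zero C U V \<and>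
     (\<forall>A. ostar C U (shift_up C V) A)"

definition twin_cotorsion_pair :: "('o,'m) tricat \<Rightarrow> ('o \<Rightarrow> bool) \<Rightarrow> ('o \<Rightarrow> bool) \<Rightarrow>
    ('o \<Rightarrow> bool) \<Rightarrow> ('o \<Rightarrow> bool) \<Rightarrow> bool" where
  "twin_cotorsion_pair C S T U V \<longleftrightarrow> cotorsion_pair C S T \<and> cotorsion_pair C U V \<and> ext1_zero C S V"

text \<open>C^- = S[-1] * W with W = T \<inter> U.\<close>
definition Cminus :: "('o,'m) tricat \<Rightarrow> ('o \<Rightarrow> bool) \<Rightarrow> ('o \<Rightarrow> bool) \<Rightarrow> ('o \<Rightarrow> bool) \<Rightarrow> 'o \<Rightarrow> bool" where
  "Cminus C S T U = ostar C (shift_down C S) (\<lambda>X. T X \<and> U X)"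

end

theory Submission
  imports Defs
begin


locale tri =
  fixes C :: "('o,'m) tricat"
  assumes tri: "triangulated C"
begin

lemmas T = tri[unfolded triangulated_def]
lemmas T3c = T[THEN conjunct2, THEN conjunct2, THEN conjunct2]
lemma addc: "additive_cat C" using tri unfolding triangulated_def by blast
lemma shc: "shift_autoequiv C" using tri unfolding triangulated_def by blast

lemma comp_hom: "f \<in> Hom C X Y \<Longrightarrow> g \<in> Hom C Y Z \<Longrightarrow> Comp C g f \<in> Hom C X Z"
  using addc unfolding additive_cat_def by auto
lemma assoc: "f \<in> Hom C W X \<Longrightarrow> g \<in> Hom C X Y \<Longrightarrow> h \<in> Hom C Y Z \<Longrightarrow>
    Comp C h (Comp C g f) = Comp C (Comp C h g) f"
  using addc unfolding additive_cat_def by auto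
lemma id_hom: "Idm C X \<in> Hom C X X"
  using addc unfolding additive_cat_def by auto
lemma id_l: "f \<in> Hom C X Y \<Longrightarrow> Comp C (Idm C Y) f = f"
  using addc unfolding additive_cat_def by auto
lemma id_r: "f \<in> Hom C X Y \<Longrightarrow> Comp C f (Idm C X) = f"
  using addc unfolding additive_cat_def by auto
lemma zer_hom: "Zer C X Y \<in> Hom C X Y"
  using addc unfolding additive_cat_def by auto
lemma add_hom: "f \<in> Hom C X Y \<Longrightarrow> g \<in> Hom C X Y \<Longrightarrow> Add C f g \<in> Hom C X Y"
  using addc unfolding additive_cat_def by auto
lemma neg_hom: "f \<in> Hom C X Y \<Longrightarrow> Neg C f \<in> Hom C X Y"
  using addc unfolding additive_cat_def by auto
lemma add_assoc: "f \<in> Hom C X Y \<Longrightarrow> g \<in> Hom C X Y \<Longrightarrow> h \<in> Hom C X Y \<Longrightarrow>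
        Add C (Add C f g) h = Add C f (Add C g h)"
  using addc unfolding additive_cat_def by auto
lemma add_comm: "f \<in> Hom C X Y \<Longrightarrow> g \<in> Hom C X Y \<Longrightarrow> Add C f g = Add C g f"
  using addc unfolding additive_cat_def by auto
lemma add_zer: "f \<in> Hom C X Y \<Longrightarrow> Add C f (Zer C X Y) = f"
  using addc unfolding additive_cat_def by auto
lemma add_neg: "f \<in> Hom C X Y \<Longrightarrow> Add C f (Neg C f) = Zer C X Y"
  using addc unfolding additive_cat_def by auto
lemma comp_add_l: "f \<in> Hom C X Y \<Longrightarrow> f' \<in> Hom C X Y \<Longrightarrow> g \<in> Hom C Y Z \<Longrightarrow>
        Comp C g (Add C f f') = Add C (Comp C g f) (Comp C g f')"
  using addc unfolding additive_cat_def by auto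
lemma comp_add_r: "f \<in> Hom C X Y \<Longrightarrow> g \<in> Hom C Y Z \<Longrightarrow> g' \<in> Hom C Y Z \<Longrightarrow>
        Comp C (Add C g g') f = Add C (Comp C g f) (Comp C g' f)"
  using addc unfolding additive_cat_def by auto
lemma zero_ex: "\<exists>Z. is_zero_obj C Z"
  using addc unfolding additive_cat_def by auto

lemma shm_hom: "f \<in> Hom C X Y \<Longrightarrow> ShM C f \<in> Hom C (Sh C X) (Sh C Y)"
  using shc unfolding shift_autoequiv_def by auto
lemma shm_id: "ShM C (Idm C X) = Idm C (Sh C X)"
  using shc unfolding shift_autoequiv_def by auto
lemma shm_comp: "f \<in> Hom C X Y \<Longrightarrow> g \<in> Hom C Y Z \<Longrightarrow> ShM C (Comp C g f) = Comp C (ShM C g) (ShM C f)"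
  using shc unfolding shift_autoequiv_def by auto
lemma shm_add: "f \<in> Hom C X Y \<Longrightarrow> g \<in> Hom C X Y \<Longrightarrow> ShM C (Add C f g) = Add C (ShM C f) (ShM C g)"
  using shc unfolding shift_autoequiv_def by auto
lemma shm_bij: "bij_betw (ShM C) (Hom C X Y) (Hom C (Sh C X) (Sh C Y))"
  using shc unfolding shift_autoequiv_def by auto
lemma sh_ess: "\<exists>X. iso_obj C (Sh C X) Y"
  using shc unfolding shift_autoequiv_def by auto

lemma dist_tri: "Dist C X Y Z f g h \<Longrightarrow> f \<in> Hom C X Y \<and> g \<in> Hom C Y Z \<and> h \<in> Hom C Z (Sh C X)"
proof -
  have "\<forall>X Y Z f g h. Dist C X Y Z f g h \<longrightarrow> is_triangle C X Y Z f g h"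
    using tri unfolding triangulated_def by (elim conjE) assumption
  then show "Dist C X Y Z f g h \<Longrightarrow> f \<in> Hom C X Y \<and> g \<in> Hom C Y Z \<and> h \<in> Hom C Z (Sh C X)"
    unfolding is_triangle_def by blast
qed
lemma tr1_iso: "Dist C X Y Z f g h \<Longrightarrow> is_triangle C X' Y' Z' f' g' h' \<Longrightarrow>
        is_iso C X X' a \<Longrightarrow> is_iso C Y Y' b \<Longrightarrow> is_iso C Z Z' c \<Longrightarrow>
        Comp C b f = Comp C f' a \<Longrightarrow> Comp C c g = Comp C g' b \<Longrightarrow>
        Comp C (ShM C a) h = Comp C h' c \<Longrightarrow> Dist C X' Y' Z' f' g' h'"
  using T3c[THEN conjunct1] by blast
lemma tr1_triv: "is_zero_obj C Z \<Longrightarrow> Dist C X X Z (Idm C X) (Zer C X Z) (Zer C Z (Sh C X))"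
  using T3c[THEN conjunct2, THEN conjunct1] by blast
lemma tr1_ext: "f \<in> Hom C X Y \<Longrightarrow> \<exists>Z g h. Dist C X Y Z f g h"
  using T3c[THEN conjunct2, THEN conjunct2, THEN conjunct1] by blast
lemma tr2: "is_triangle C X Y Z f g h \<Longrightarrow>
        (Dist C X Y Z f g h \<longleftrightarrow> Dist C Y Z (Sh C X) g h (Neg C (ShM C f)))"
  using T3c[THEN conjunct2, THEN conjunct2, THEN conjunct2, THEN conjunct1] by blast
lemma tr3: "Dist C X Y Z f g h \<Longrightarrow> Dist C X' Y' Z' f' g' h' \<Longrightarrow>
        a \<in> Hom C X X' \<Longrightarrow> b \<in> Hom C Y Y' \<Longrightarrow> Comp C b f = Comp C f' a \<Longrightarrow>
        (\<exists>c \<in> Hom C Z Z'. Comp C c g = Comp C g' b \<and> Comp C (ShM C a) h = Comp C h' c)"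
  using T3c[THEN conjunct2, THEN conjunct2, THEN conjunct2, THEN conjunct2, THEN conjunct1] by blast
lemma tr4: "Dist C X Y Z' f p q \<Longrightarrow> Dist C Y Z X' g r s \<Longrightarrow> Dist C X Z Y' (Comp C g f) t w \<Longrightarrow>
        (\<exists>u \<in> Hom C Z' Y'. \<exists>v \<in> Hom C Y' X'.
            Dist C Z' Y' X' u v (Comp C (ShM C p) s) \<and>
            Comp C u p = Comp C t g \<and> Comp C w u = q \<and>
            Comp C v t = r \<and> Comp C s v = Comp C (ShM C f) w)"
  using T3c[THEN conjunct2, THEN conjunct2, THEN conjunct2, THEN conjunct2, THEN conjunct2] by blast

end


context tri begin

lemma negf_f: "f \<in> Hom C X Y \<Longrightarrow> Add C (Neg C f) f = Zer C X Y"
proof -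
  assume a: "f \<in> Hom C X Y"
  have "Add C (Neg C f) f = Add C f (Neg C f)" by (rule add_comm[OF neg_hom[OF a] a])
  then show ?thesis using add_neg[OF a] by simp
qed
lemma zer_add: "f \<in> Hom C X Y \<Longrightarrow> Add C (Zer C X Y) f = f"
proof -
  assume a: "f \<in> Hom C X Y"
  have "Add C (Zer C X Y) f = Add C f (Zer C X Y)" by (rule add_comm[OF zer_hom a])
  then show ?thesis using add_zer[OF a] by simp
qed

lemma add_cancel:
  assumes "f \<in> Hom C X Y" "g \<in> Hom C X Y" "h \<in> Hom C X Y" "Add C f g = Add C f h"
  shows "g = h"
proof -
  have *: "Add C (Neg C f) (Add C f k) = k" if "k \<in> Hom C X Y" for k
  proof -
    have "Add C (Neg C f) (Add C f k) = Add C (Add C (Neg C f) f) k"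
      by (rule add_assoc[symmetric, OF neg_hom[OF assms(1)] assms(1) that])
    also have "\<dots> = k" using negf_f[OF assms(1)] zer_add[OF that] by simp
    finally show ?thesis .
  qed
  have "g = Add C (Neg C f) (Add C f g)" using *[OF assms(2)] by simp
  also have "\<dots> = Add C (Neg C f) (Add C f h)" using assms(4) by simp
  also have "\<dots> = h" by (rule *[OF assms(3)])
  finally show ?thesis .
qed

lemma idem_zero: "a \<in> Hom C X Y \<Longrightarrow> Add C a a = a \<Longrightarrow> a = Zer C X Y"
  by (rule add_cancel[of a X Y], assumption+, rule zer_hom, simp add: add_zer)

lemma comp_zer_r: "f \<in> Hom C Y Z \<Longrightarrow> Comp C f (Zer C X Y) = Zer C X Z"
  apply (rule idem_zero)
   apply (rule comp_hom[OF zer_hom], assumption)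
  apply (subst comp_add_l[symmetric, OF zer_hom zer_hom], assumption)
  apply (simp add: add_zer zer_hom)
  done
lemma comp_zer_l: "f \<in> Hom C X Y \<Longrightarrow> Comp C (Zer C Y Z) f = Zer C X Z"
  apply (rule idem_zero)
   apply (rule comp_hom[OF _ zer_hom], assumption)
  apply (subst comp_add_r[symmetric, OF _ zer_hom zer_hom], assumption)
  apply (simp add: add_zer zer_hom)
  done

lemma comp_neg_r: "f \<in> Hom C X Y \<Longrightarrow> g \<in> Hom C Y Z \<Longrightarrow> Comp C g (Neg C f) = Neg C (Comp C g f)"
proof -
  assume a: "f \<in> Hom C X Y" "g \<in> Hom C Y Z"
  have "Add C (Comp C g f) (Comp C g (Neg C f)) = Comp C g (Add C f (Neg C f))"
    using comp_add_l[OF a(1) neg_hom[OF a(1)] a(2)] by simp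
  also have "\<dots> = Zer C X Z" using add_neg[OF a(1)] comp_zer_r[OF a(2)] by simp
  also have "\<dots> = Add C (Comp C g f) (Neg C (Comp C g f))"
    using add_neg[OF comp_hom[OF a]] by simp
  finally show ?thesis
    by (rule add_cancel[OF comp_hom[OF a] comp_hom[OF neg_hom[OF a(1)] a(2)] neg_hom[OF comp_hom[OF a]]])
qed
lemma comp_neg_l: "f \<in> Hom C X Y \<Longrightarrow> g \<in> Hom C Y Z \<Longrightarrow> Comp C (Neg C g) f = Neg C (Comp C g f)"
proof -
  assume a: "f \<in> Hom C X Y" "g \<in> Hom C Y Z"
  have "Add C (Comp C g f) (Comp C (Neg C g) f) = Comp C (Add C g (Neg C g)) f"
    using comp_add_r[OF a(1) a(2) neg_hom[OF a(2)]] by simp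
  also have "\<dots> = Zer C X Z" using add_neg[OF a(2)] comp_zer_l[OF a(1)] by simp
  also have "\<dots> = Add C (Comp C g f) (Neg C (Comp C g f))"
    using add_neg[OF comp_hom[OF a]] by simp
  finally show ?thesis
    by (rule add_cancel[OF comp_hom[OF a] comp_hom[OF a(1) neg_hom[OF a(2)]] neg_hom[OF comp_hom[OF a]]])
qed

lemma neg_neg: "f \<in> Hom C X Y \<Longrightarrow> Neg C (Neg C f) = f"
  apply (rule add_cancel[of "Neg C f" X Y])
     apply (simp_all add: neg_hom)
  using add_neg[OF neg_hom, of f X Y] negf_f[of f X Y] by simp
lemma neg_zer: "Neg C (Zer C X Y) = Zer C X Y"
  apply (rule add_cancel[of "Zer C X Y" X Y])
     apply (simp_all add: neg_hom zer_hom)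
  apply (simp add: add_neg add_zer zer_hom)
  done
lemma neg_inj: "f \<in> Hom C X Y \<Longrightarrow> g \<in> Hom C X Y \<Longrightarrow> Neg C f = Neg C g \<Longrightarrow> f = g"
  by (metis neg_neg)
lemma sum_zero_eq: "a \<in> Hom C X Y \<Longrightarrow> b \<in> Hom C X Y \<Longrightarrow> Add C a (Neg C b) = Zer C X Y \<Longrightarrow> a = b"
  apply (rule add_cancel[of "Neg C b" X Y])
     apply (simp_all add: neg_hom)
  using add_comm[OF neg_hom, of b X Y a] negf_f[of b X Y] by simp

lemma shm_zer: "ShM C (Zer C X Y) = Zer C (Sh C X) (Sh C Y)"
  apply (rule idem_zero)
   apply (rule shm_hom[OF zer_hom])
  apply (subst shm_add[symmetric, OF zer_hom zer_hom])
  apply (simp add: add_zer zer_hom)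
  done
lemma shm_neg: "f \<in> Hom C X Y \<Longrightarrow> ShM C (Neg C f) = Neg C (ShM C f)"
proof -
  assume a: "f \<in> Hom C X Y"
  have "Add C (ShM C f) (ShM C (Neg C f)) = ShM C (Add C f (Neg C f))"
    using shm_add[OF a neg_hom[OF a]] by simp
  also have "\<dots> = Add C (ShM C f) (Neg C (ShM C f))"
    using add_neg[OF a] add_neg[OF shm_hom[OF a]] shm_zer by simp
  finally show ?thesis
    by (rule add_cancel[OF shm_hom[OF a] shm_hom[OF neg_hom[OF a]] neg_hom[OF shm_hom[OF a]]])
qed
lemma shm_inj: "f \<in> Hom C X Y \<Longrightarrow> g \<in> Hom C X Y \<Longrightarrow> ShM C f = ShM C g \<Longrightarrow> f = g"
  using shm_bij[of X Y] unfolding bij_betw_def inj_on_def by blast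
lemma shm_surj: "\<phi> \<in> Hom C (Sh C X) (Sh C Y) \<Longrightarrow> \<exists>f\<in>Hom C X Y. ShM C f = \<phi>"
proof -
  assume a: "\<phi> \<in> Hom C (Sh C X) (Sh C Y)"
  have "ShM C ` Hom C X Y = Hom C (Sh C X) (Sh C Y)" using shm_bij[of X Y] unfolding bij_betw_def by blast
  then have "\<phi> \<in> ShM C ` Hom C X Y" using a by simp
  then show ?thesis by (metis imageE)
qed

end


context tri begin

lemma is_isoE: "is_iso C X Y f \<Longrightarrow> (\<And>g. f \<in> Hom C X Y \<Longrightarrow> g \<in> Hom C Y X \<Longrightarrow>
   Comp C g f = Idm C X \<Longrightarrow> Comp C f g = Idm C Y \<Longrightarrow> P) \<Longrightarrow> P"
  unfolding is_iso_def by blast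
lemma is_isoI: "f \<in> Hom C X Y \<Longrightarrow> g \<in> Hom C Y X \<Longrightarrow>
   Comp C g f = Idm C X \<Longrightarrow> Comp C f g = Idm C Y \<Longrightarrow> is_iso C X Y f"
  unfolding is_iso_def by blast
lemma is_iso_id: "is_iso C X X (Idm C X)"
  using is_isoI[OF id_hom id_hom] id_l[OF id_hom] by blast
lemma iso_obj_sym: "iso_obj C X Y \<Longrightarrow> iso_obj C Y X"
  unfolding iso_obj_def
proof -
  assume "\<exists>f. is_iso C X Y f"
  then obtain f where "is_iso C X Y f" by blast
  then obtain g where "f \<in> Hom C X Y" "g \<in> Hom C Y X" "Comp C g f = Idm C X" "Comp C f g = Idm C Y"
    by (rule is_isoE)
  then have "is_iso C Y X g" by (intro is_isoI[of g Y X f])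
  then show "\<exists>f. is_iso C Y X f" by blast
qed
lemma iso_comp: "is_iso C X Y f \<Longrightarrow> is_iso C Y Z g \<Longrightarrow> is_iso C X Z (Comp C g f)"
proof -
  assume "is_iso C X Y f" "is_iso C Y Z g"
  then obtain f' g' where f: "f \<in> Hom C X Y" "f' \<in> Hom C Y X" "Comp C f' f = Idm C X" "Comp C f f' = Idm C Y"
     and g: "g \<in> Hom C Y Z" "g' \<in> Hom C Z Y" "Comp C g' g = Idm C Y" "Comp C g g' = Idm C Z"
    by (metis is_isoE)
  have "Comp C (Comp C f' g') (Comp C g f) = Comp C f' (Comp C g' (Comp C g f))"
    using assoc[OF comp_hom[OF f(1) g(1)] g(2) f(2)] by simp
  also have "\<dots> = Comp C f' (Comp C (Comp C g' g) f)" using assoc[OF f(1) g(1) g(2)] by simp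
  also have "\<dots> = Idm C X" using g(3) id_l[OF f(1)] f(3) by simp
  finally have 1: "Comp C (Comp C f' g') (Comp C g f) = Idm C X" .
  have "Comp C (Comp C g f) (Comp C f' g') = Comp C g (Comp C f (Comp C f' g'))"
    using assoc[OF comp_hom[OF g(2) f(2)] f(1) g(1)] by simp
  also have "\<dots> = Comp C g (Comp C (Comp C f f') g')" using assoc[OF g(2) f(2) f(1)] by simp
  also have "\<dots> = Idm C Z" using f(4) id_l[OF g(2)] g(4) by simp
  finally have 2: "Comp C (Comp C g f) (Comp C f' g') = Idm C Z" .
  show ?thesis by (rule is_isoI[OF comp_hom[OF f(1) g(1)] comp_hom[OF g(2) f(2)] 1 2])
qed
lemma iso_obj_trans: "iso_obj C X Y \<Longrightarrow> iso_obj C Y Z \<Longrightarrow> iso_obj C X Z"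
  unfolding iso_obj_def using iso_comp by blast

lemma iso_obj_reflect: "iso_obj C (Sh C A) (Sh C B) \<Longrightarrow> iso_obj C A B"
proof -
  assume "iso_obj C (Sh C A) (Sh C B)"
  then obtain i where "is_iso C (Sh C A) (Sh C B) i" unfolding iso_obj_def by blast
  then obtain j where i: "i \<in> Hom C (Sh C A) (Sh C B)" "j \<in> Hom C (Sh C B) (Sh C A)"
     "Comp C j i = Idm C (Sh C A)" "Comp C i j = Idm C (Sh C B)"
    by (rule is_isoE)
  obtain i' where i': "i' \<in> Hom C A B" "ShM C i' = i" using shm_surj i(1) by blast
  obtain j' where j': "j' \<in> Hom C B A" "ShM C j' = j" using shm_surj i(2) by blast
  have "ShM C (Comp C j' i') = ShM C (Idm C A)"
    using shm_comp[OF i'(1) j'(1)] i'(2) j'(2) i(3) shm_id by simp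
  then have 1: "Comp C j' i' = Idm C A" using shm_inj comp_hom[OF i'(1) j'(1)] id_hom by blast
  have "ShM C (Comp C i' j') = ShM C (Idm C B)"
    using shm_comp[OF j'(1) i'(1)] i'(2) j'(2) i(4) shm_id by simp
  then have 2: "Comp C i' j' = Idm C B" using shm_inj comp_hom[OF j'(1) i'(1)] id_hom by blast
  have "is_iso C A B i'" by (rule is_isoI[OF i'(1) j'(1) 1 2])
  then show ?thesis unfolding iso_obj_def by blast
qed

lemma rot: "Dist C X Y Z f g h \<Longrightarrow> Dist C Y Z (Sh C X) g h (Neg C (ShM C f))"
  using tr2 dist_tri unfolding is_triangle_def by blast

lemma dist_comp_zero:
  assumes d: "Dist C X Y Z f g h" shows "Comp C g f = Zer C X Z"
proof -
  obtain Z0 where z: "is_zero_obj C Z0" using zero_ex by blast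
  have f: "f \<in> Hom C X Y" using dist_tri[OF d] by blast
  have t: "Dist C X X Z0 (Idm C X) (Zer C X Z0) (Zer C Z0 (Sh C X))" by (rule tr1_triv[OF z])
  have "Comp C f (Idm C X) = Comp C f (Idm C X)" ..
  from tr3[OF t d id_hom f this] obtain c where
    c: "c \<in> Hom C Z0 Z" "Comp C c (Zer C X Z0) = Comp C g f" by blast
  then show ?thesis using comp_zer_r[OF c(1)] by simp
qed

lemma dist_factor_l:
  assumes d: "Dist C X Y Z f g h" and ph: "\<phi> \<in> Hom C Q Y" and z0: "Comp C g \<phi> = Zer C Q Z"
  shows "\<exists>\<psi>\<in>Hom C Q X. Comp C f \<psi> = \<phi>"
proof -
  obtain Z0 where z: "is_zero_obj C Z0" using zero_ex by blast
  have f: "f \<in> Hom C X Y" using dist_tri[OF d] by blast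
  have t: "Dist C Q Q Z0 (Idm C Q) (Zer C Q Z0) (Zer C Z0 (Sh C Q))" by (rule tr1_triv[OF z])
  have tr: "is_triangle C Q Q Z0 (Idm C Q) (Zer C Q Z0) (Zer C Z0 (Sh C Q))"
    by (simp add: is_triangle_def id_hom zer_hom)
  have rt: "Dist C Q Z0 (Sh C Q) (Zer C Q Z0) (Zer C Z0 (Sh C Q)) (Neg C (ShM C (Idm C Q)))"
    using tr2[OF tr] t by blast
  have rd: "Dist C Y Z (Sh C X) g h (Neg C (ShM C f))" by (rule rot[OF d])
  have cond: "Comp C (Zer C Z0 Z) (Zer C Q Z0) = Comp C g \<phi>"
    using comp_zer_l[OF zer_hom] z0 by simp
  from tr3[OF rt rd ph zer_hom cond] obtain c where c: "c \<in> Hom C (Sh C Q) (Sh C X)"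
     "Comp C (ShM C \<phi>) (Neg C (ShM C (Idm C Q))) = Comp C (Neg C (ShM C f)) c" by blast
  have l: "Comp C (ShM C \<phi>) (Neg C (ShM C (Idm C Q))) = Neg C (ShM C \<phi>)"
    using shm_id comp_neg_r[OF id_hom shm_hom[OF ph]] id_r[OF shm_hom[OF ph]] by simp
  have r: "Comp C (Neg C (ShM C f)) c = Neg C (Comp C (ShM C f) c)"
    by (rule comp_neg_l[OF c(1) shm_hom[OF f]])
  have e: "ShM C \<phi> = Comp C (ShM C f) c"
    using neg_inj[OF shm_hom[OF ph] comp_hom[OF c(1) shm_hom[OF f]]] c(2) l r by simp
  obtain \<psi> where ps: "\<psi> \<in> Hom C Q X" "ShM C \<psi> = c" using shm_surj[OF c(1)] by blast
  have "ShM C \<phi> = ShM C (Comp C f \<psi>)" using e ps shm_comp[OF ps(1) f] by simp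
  then have "\<phi> = Comp C f \<psi>" using shm_inj[OF ph comp_hom[OF ps(1) f]] by blast
  then show ?thesis using ps(1) by blast
qed

lemma dist_factor_r:
  assumes d: "Dist C X Y Z f g h" and ph: "\<phi> \<in> Hom C Y Q" and z0: "Comp C \<phi> f = Zer C X Q"
  shows "\<exists>\<psi>\<in>Hom C Z Q. Comp C \<psi> g = \<phi>"
proof -
  obtain N where z: "is_zero_obj C N" using zero_ex by blast
  obtain Z0 where "iso_obj C (Sh C Z0) N" using sh_ess by blast
  then obtain i where "is_iso C (Sh C Z0) N i" unfolding iso_obj_def by blast
  then obtain j where ij: "i \<in> Hom C (Sh C Z0) N" "j \<in> Hom C N (Sh C Z0)"
     "Comp C j i = Idm C (Sh C Z0)" "Comp C i j = Idm C N"
    by (rule is_isoE)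
  have isoj: "is_iso C N (Sh C Z0) j" by (rule is_isoI[OF ij(2) ij(1) ij(4) ij(3)])
  have t: "Dist C Q Q N (Idm C Q) (Zer C Q N) (Zer C N (Sh C Q))" by (rule tr1_triv[OF z])
  have tri': "is_triangle C Q Q (Sh C Z0) (Idm C Q) (Zer C Q (Sh C Z0)) (Zer C (Sh C Z0) (Sh C Q))"
    by (simp add: is_triangle_def id_hom zer_hom)
  have c2: "Comp C j (Zer C Q N) = Comp C (Zer C Q (Sh C Z0)) (Idm C Q)"
    using comp_zer_r[OF ij(2)] comp_zer_l[OF id_hom] by simp
  have c3: "Comp C (ShM C (Idm C Q)) (Zer C N (Sh C Q)) = Comp C (Zer C (Sh C Z0) (Sh C Q)) j"
    using shm_id comp_zer_r[OF id_hom] comp_zer_l[OF ij(2)] by simp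
  have d1: "Dist C Q Q (Sh C Z0) (Idm C Q) (Zer C Q (Sh C Z0)) (Zer C (Sh C Z0) (Sh C Q))"
    by (rule tr1_iso[OF t tri' is_iso_id is_iso_id isoj refl c2 c3])
  have tri2: "is_triangle C Z0 Q Q (Zer C Z0 Q) (Idm C Q) (Zer C Q (Sh C Z0))"
    by (simp add: is_triangle_def id_hom zer_hom)
  have "Neg C (ShM C (Zer C Z0 Q)) = Zer C (Sh C Z0) (Sh C Q)" using shm_zer neg_zer by simp
  then have d2: "Dist C Z0 Q Q (Zer C Z0 Q) (Idm C Q) (Zer C Q (Sh C Z0))"
    using tr2[OF tri2] d1 by simp
  have cond: "Comp C \<phi> f = Comp C (Zer C Z0 Q) (Zer C X Z0)"
    using z0 comp_zer_l[OF zer_hom] by simp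
  from tr3[OF d d2 zer_hom ph cond] obtain c where c: "c \<in> Hom C Z Q" "Comp C c g = Comp C (Idm C Q) \<phi>"
    by blast
  then show ?thesis using id_l[OF ph] by auto
qed

lemma rotback:
  assumes d: "Dist C Y Z W g h k"
  shows "\<exists>X f h'. Dist C X Y Z f g h' \<and> iso_obj C W (Sh C X)"
proof -
  have g: "g \<in> Hom C Y Z" and h: "h \<in> Hom C Z W" and k: "k \<in> Hom C W (Sh C Y)" using dist_tri[OF d] by auto
  obtain X where "iso_obj C (Sh C X) W" using sh_ess by blast
  then obtain i where "is_iso C (Sh C X) W i" unfolding iso_obj_def by blast
  then obtain j where ij: "i \<in> Hom C (Sh C X) W" "j \<in> Hom C W (Sh C X)"
     "Comp C j i = Idm C (Sh C X)" "Comp C i j = Idm C W"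
    by (rule is_isoE)
  have isoj: "is_iso C W (Sh C X) j" by (rule is_isoI[OF ij(2) ij(1) ij(4) ij(3)])
  have ki: "Comp C k i \<in> Hom C (Sh C X) (Sh C Y)" by (rule comp_hom[OF ij(1) k])
  obtain f where f: "f \<in> Hom C X Y" "ShM C f = Neg C (Comp C k i)" using shm_surj[OF neg_hom[OF ki]] by blast
  have tri': "is_triangle C Y Z (Sh C X) g (Comp C j h) (Comp C k i)"
    using g comp_hom[OF h ij(2)] ki by (simp add: is_triangle_def)
  have c1: "Comp C (Idm C Z) g = Comp C g (Idm C Y)" using id_l[OF g] id_r[OF g] by simp
  have c2: "Comp C j h = Comp C (Comp C j h) (Idm C Z)" using id_r[OF comp_hom[OF h ij(2)]] by simp
  have "Comp C (Comp C k i) j = Comp C k (Comp C i j)" using assoc[OF ij(2) ij(1) k] by simp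
  then have c3: "Comp C (ShM C (Idm C Y)) k = Comp C (Comp C k i) j"
    using shm_id id_l[OF k] ij(4) id_r[OF k] by simp
  have d1: "Dist C Y Z (Sh C X) g (Comp C j h) (Comp C k i)"
    by (rule tr1_iso[OF d tri' is_iso_id is_iso_id isoj c1 c2 c3])
  have tri2: "is_triangle C X Y Z f g (Comp C j h)"
    using f(1) g comp_hom[OF h ij(2)] by (simp add: is_triangle_def)
  have "Neg C (ShM C f) = Comp C k i" using f(2) neg_neg[OF ki] by simp
  then have "Dist C X Y Z f g (Comp C j h)" using tr2[OF tri2] d1 by simp
  moreover have "iso_obj C W (Sh C X)" using isoj unfolding iso_obj_def by blast
  ultimately show ?thesis by blast
qed

lemma transport:
  assumes d: "Dist C X Y Z f g h" and i: "is_iso C Z Z' i"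
  shows "\<exists>h'. Dist C X Y Z' f (Comp C i g) h'"
proof -
  have f: "f \<in> Hom C X Y" and g: "g \<in> Hom C Y Z" and h: "h \<in> Hom C Z (Sh C X)" using dist_tri[OF d] by auto
  obtain j where ij: "i \<in> Hom C Z Z'" "j \<in> Hom C Z' Z" "Comp C j i = Idm C Z" "Comp C i j = Idm C Z'"
    using i by (rule is_isoE)
  have tri': "is_triangle C X Y Z' f (Comp C i g) (Comp C h j)"
    using f comp_hom[OF g ij(1)] comp_hom[OF ij(2) h] by (simp add: is_triangle_def)
  have c1: "Comp C (Idm C Y) f = Comp C f (Idm C X)" using id_l[OF f] id_r[OF f] by simp
  have c2: "Comp C i g = Comp C (Comp C i g) (Idm C Y)" using id_r[OF comp_hom[OF g ij(1)]] by simp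
  have "Comp C (Comp C h j) i = Comp C h (Comp C j i)" using assoc[OF ij(1) ij(2) h] by simp
  then have c3: "Comp C (ShM C (Idm C X)) h = Comp C (Comp C h j) i"
    using shm_id id_l[OF h] ij(3) id_r[OF h] by simp
  have "Dist C X Y Z' f (Comp C i g) (Comp C h j)"
    by (rule tr1_iso[OF d tri' is_iso_id is_iso_id i c1 c2 c3])
  then show ?thesis by blast
qed

end


context tri begin

lemma split_mono_zero:
  assumes d: "Dist C X Y Z f g h" and h0: "h = Zer C Z (Sh C X)"
    and ps: "\<psi> \<in> Hom C Q X" and fz: "Comp C f \<psi> = Zer C Q Y"
  shows "\<psi> = Zer C Q X"
proof -
  have f: "f \<in> Hom C X Y" and g: "g \<in> Hom C Y Z" using dist_tri[OF d] by auto
  have rrd: "Dist C Z (Sh C X) (Sh C Y) h (Neg C (ShM C f)) (Neg C (ShM C g))"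
    by (rule rot[OF rot[OF d]])
  have "Comp C (Neg C (ShM C f)) (ShM C \<psi>) = Neg C (Comp C (ShM C f) (ShM C \<psi>))"
    by (rule comp_neg_l[OF shm_hom[OF ps] shm_hom[OF f]])
  also have "\<dots> = Neg C (ShM C (Comp C f \<psi>))" using shm_comp[OF ps f] by simp
  also have "\<dots> = Zer C (Sh C Q) (Sh C Y)" using fz shm_zer neg_zer by simp
  finally have "Comp C (Neg C (ShM C f)) (ShM C \<psi>) = Zer C (Sh C Q) (Sh C Y)" .
  from dist_factor_l[OF rrd shm_hom[OF ps] this] obtain \<chi> where
    ch: "\<chi> \<in> Hom C (Sh C Q) Z" "Comp C h \<chi> = ShM C \<psi>" by blast
  have "ShM C \<psi> = ShM C (Zer C Q X)" using ch h0 comp_zer_l[OF ch(1)] shm_zer by simp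
  then show ?thesis using shm_inj[OF ps zer_hom] by blast
qed

lemma split:
  assumes d: "Dist C X Y Z f g h" and h0: "h = Zer C Z (Sh C X)"
  shows "is_biprod C X Z Y"
proof -
  have f: "f \<in> Hom C X Y" and g: "g \<in> Hom C Y Z" using dist_tri[OF d] by auto
  have rd: "Dist C Y Z (Sh C X) g h (Neg C (ShM C f))" by (rule rot[OF d])
  have "Comp C h (Idm C Z) = Zer C Z (Sh C X)" using h0 comp_zer_l[OF id_hom] by simp
  from dist_factor_l[OF rd id_hom this] obtain s where s: "s \<in> Hom C Z Y" "Comp C g s = Idm C Z" by blast
  have sg: "Comp C s g \<in> Hom C Y Y" by (rule comp_hom[OF g s(1)])
  define \<phi> where "\<phi> = Add C (Idm C Y) (Neg C (Comp C s g))"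
  have ph: "\<phi> \<in> Hom C Y Y" unfolding \<phi>_def by (rule add_hom[OF id_hom neg_hom[OF sg]])
  have gsg: "Comp C g (Comp C s g) = g"
    using assoc[OF g s(1) g] s(2) id_l[OF g] by simp
  have "Comp C g \<phi> = Add C (Comp C g (Idm C Y)) (Comp C g (Neg C (Comp C s g)))"
    unfolding \<phi>_def by (rule comp_add_l[OF id_hom neg_hom[OF sg] g])
  also have "\<dots> = Add C g (Neg C g)" using id_r[OF g] comp_neg_r[OF sg g] gsg by simp
  also have "\<dots> = Zer C Y Z" by (rule add_neg[OF g])
  finally have "Comp C g \<phi> = Zer C Y Z" .
  from dist_factor_l[OF d ph this] obtain r where r: "r \<in> Hom C Y X" "Comp C f r = \<phi>" by blast
  have gf: "Comp C g f = Zer C X Z" by (rule dist_comp_zero[OF d])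
  note mono = split_mono_zero[OF d h0]
  have sgf: "Comp C (Comp C s g) f = Zer C X Y"
    using assoc[OF f g s(1)] gf comp_zer_r[OF s(1)] by simp
  have phf: "Comp C \<phi> f = f"
  proof -
    have "Comp C \<phi> f = Add C (Comp C (Idm C Y) f) (Comp C (Neg C (Comp C s g)) f)"
      unfolding \<phi>_def by (rule comp_add_r[OF f id_hom neg_hom[OF sg]])
    also have "\<dots> = Add C f (Neg C (Zer C X Y))" using id_l[OF f] comp_neg_l[OF f sg] sgf by simp
    also have "\<dots> = f" using neg_zer add_zer[OF f] by simp
    finally show ?thesis .
  qed
  have rf0: "Add C (Comp C r f) (Neg C (Idm C X)) \<in> Hom C X X"
    by (rule add_hom[OF comp_hom[OF f r(1)] neg_hom[OF id_hom]])
  have "Comp C f (Add C (Comp C r f) (Neg C (Idm C X)))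
      = Add C (Comp C f (Comp C r f)) (Comp C f (Neg C (Idm C X)))"
    by (rule comp_add_l[OF comp_hom[OF f r(1)] neg_hom[OF id_hom] f])
  also have "\<dots> = Add C (Comp C (Comp C f r) f) (Neg C f)"
    using assoc[OF f r(1) f] comp_neg_r[OF id_hom f] id_r[OF f] by simp
  also have "\<dots> = Zer C X Y" using r(2) phf add_neg[OF f] by simp
  finally have "Add C (Comp C r f) (Neg C (Idm C X)) = Zer C X X" using mono[OF rf0] by simp
  then have rf: "Comp C r f = Idm C X" using sum_zero_eq[OF comp_hom[OF f r(1)] id_hom] by blast
  have sgs: "Comp C (Comp C s g) s = s" using assoc[OF s(1) g s(1)] s(2) id_r[OF s(1)] by simp
  have "Comp C f (Comp C r s) = Comp C \<phi> s" using assoc[OF s(1) r(1) f] r(2) by simp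
  also have "\<dots> = Add C (Comp C (Idm C Y) s) (Comp C (Neg C (Comp C s g)) s)"
      unfolding \<phi>_def by (rule comp_add_r[OF s(1) id_hom neg_hom[OF sg]])
  also have "\<dots> = Add C s (Neg C s)" using id_l[OF s(1)] comp_neg_l[OF s(1) sg] sgs by simp
  also have "\<dots> = Zer C Z Y" by (rule add_neg[OF s(1)])
  finally have rs: "Comp C r s = Zer C Z X" using mono[OF comp_hom[OF s(1) r(1)]] by simp
  have "Add C (Comp C f r) (Comp C s g) = Add C (Idm C Y) (Add C (Neg C (Comp C s g)) (Comp C s g))"
    unfolding r(2) \<phi>_def by (rule add_assoc[OF id_hom neg_hom[OF sg] sg])
  also have "\<dots> = Idm C Y" using negf_f[OF sg] add_zer[OF id_hom] by simp
  finally have sum: "Add C (Comp C f r) (Comp C s g) = Idm C Y" .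
  show ?thesis unfolding is_biprod_def
    using f s(1) r(1) g rf s(2) rs gf sum by blast
qed

lemma split_mono:
  assumes d: "Dist C X Y Z f g h" and r: "r \<in> Hom C Y X" and rf: "Comp C r f = Idm C X"
  shows "is_biprod C X Z Y"
proof -
  have f: "f \<in> Hom C X Y" and h: "h \<in> Hom C Z (Sh C X)" using dist_tri[OF d] by auto
  have "Comp C (Neg C (ShM C f)) h = Zer C Z (Sh C Y)" by (rule dist_comp_zero[OF rot[OF rot[OF d]]])
  then have "Neg C (Comp C (ShM C f) h) = Zer C Z (Sh C Y)" using comp_neg_l[OF h shm_hom[OF f]] by simp
  then have fh: "Comp C (ShM C f) h = Zer C Z (Sh C Y)"
    using neg_neg[OF comp_hom[OF h shm_hom[OF f]]] neg_zer by metis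
  have "h = Comp C (ShM C (Comp C r f)) h" using rf shm_id id_l[OF h] by simp
  also have "\<dots> = Comp C (ShM C r) (Comp C (ShM C f) h)"
    using shm_comp[OF f r] assoc[OF h shm_hom[OF f] shm_hom[OF r]] by simp
  also have "\<dots> = Zer C Z (Sh C X)" using fh comp_zer_r[OF shm_hom[OF r]] by simp
  finally show ?thesis by (rule split[OF d])
qed

lemma subcat_iso: "subcat C P \<Longrightarrow> P X \<Longrightarrow> iso_obj C X Y \<Longrightarrow> P Y"
  unfolding subcat_def by blast
lemma subcat_summand: "subcat C P \<Longrightarrow> is_biprod C X Y S \<Longrightarrow> P S \<Longrightarrow> P X"
  unfolding subcat_def by blast

lemma left_perp:
  assumes cp: "cotorsion_pair C L R"
    and perp: "\<And>V0 \<phi>. R V0 \<Longrightarrow> \<phi> \<in> Hom C B (Sh C V0) \<Longrightarrow> \<phi> = Zer C B (Sh C V0)"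
  shows "L B"
proof -
  have "ostar C L (shift_up C R) B" using cp unfolding cotorsion_pair_def by blast
  then obtain U0 Y0 k e l where u: "L U0" "shift_up C R Y0" and d: "Dist C U0 B Y0 k e l"
    unfolding ostar_def by blast
  obtain V0 where v: "R V0" "iso_obj C (Sh C V0) Y0" using u(2) unfolding shift_up_def by blast
  then obtain i where "is_iso C (Sh C V0) Y0 i" unfolding iso_obj_def by blast
  then obtain j where ij: "i \<in> Hom C (Sh C V0) Y0" "j \<in> Hom C Y0 (Sh C V0)"
     "Comp C j i = Idm C (Sh C V0)" "Comp C i j = Idm C Y0" by (rule is_isoE)
  have k: "k \<in> Hom C U0 B" and e: "e \<in> Hom C B Y0" using dist_tri[OF d] by auto
  have je: "Comp C j e = Zer C B (Sh C V0)" using perp[OF v(1) comp_hom[OF e ij(2)]] .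
  have "e = Comp C (Comp C i j) e" using ij(4) id_l[OF e] by simp
  also have "\<dots> = Comp C i (Comp C j e)" using assoc[OF e ij(2) ij(1)] by simp
  also have "\<dots> = Zer C B Y0" using je comp_zer_r[OF ij(1)] by simp
  finally have "Comp C e (Idm C B) = Zer C B Y0" using id_r[OF e] by simp
  from dist_factor_l[OF d id_hom this] obtain s where s: "s \<in> Hom C B U0" "Comp C k s = Idm C B" by blast
  obtain K t w where d2: "Dist C B U0 K s t w" using tr1_ext[OF s(1)] by blast
  have "is_biprod C B K U0" by (rule split_mono[OF d2 k s(2)])
  moreover have "subcat C L" using cp unfolding cotorsion_pair_def by blast
  ultimately show ?thesis using subcat_summand u(1) by blast
qed

lemma left_ext:
  assumes cp: "cotorsion_pair C L R"
    and d: "Dist C A B D f g h" and la: "L A" and ld: "L D"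
  shows "L B"
proof (rule left_perp[OF cp])
  fix V0 \<phi> assume v: "R V0" and ph: "\<phi> \<in> Hom C B (Sh C V0)"
  have ext: "ext1_zero C L R" using cp unfolding cotorsion_pair_def by blast
  have f: "f \<in> Hom C A B" and g: "g \<in> Hom C B D" using dist_tri[OF d] by auto
  have "Comp C \<phi> f \<in> Hom C A (Sh C V0)" by (rule comp_hom[OF f ph])
  then have "Comp C \<phi> f = Zer C A (Sh C V0)" using ext la v unfolding ext1_zero_def by blast
  from dist_factor_r[OF d ph this] obtain \<psi> where ps: "\<psi> \<in> Hom C D (Sh C V0)" "Comp C \<psi> g = \<phi>" by blast
  have "\<psi> = Zer C D (Sh C V0)" using ps(1) ext ld v unfolding ext1_zero_def by blast
  then show "\<phi> = Zer C B (Sh C V0)" using ps(2) comp_zer_l[OF g] by simp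
qed

end


context tri begin

lemma S_sub_U:
  assumes tw: "twin_cotorsion_pair C S T U V" and s: "S X" shows "U X"
proof -
  have cp: "cotorsion_pair C U V" and e: "ext1_zero C S V" using tw unfolding twin_cotorsion_pair_def by auto
  show ?thesis
  proof (rule left_perp[OF cp])
    fix V0 \<phi> assume "V V0" "\<phi> \<in> Hom C X (Sh C V0)"
    then show "\<phi> = Zer C X (Sh C V0)" using e s unfolding ext1_zero_def by blast
  qed
qed

lemma minus_of_U:
  assumes tw: "twin_cotorsion_pair C S T U V"
    and d: "Dist C P B W' a b c" and sp: "S (Sh C P)" and uw: "U W'"
  shows "Cminus C S T U B"
proof -
  have cpS: "cotorsion_pair C S T" and cpU: "cotorsion_pair C U V" using tw unfolding twin_cotorsion_pair_def by auto
  have subS: "subcat C S" and subT: "subcat C T" and subU: "subcat C U"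
    using cpS cpU unfolding cotorsion_pair_def by auto
  have b: "b \<in> Hom C B W'" using dist_tri[OF d] by auto
  have "ostar C S (shift_up C T) (Sh C W')" using cpS unfolding cotorsion_pair_def by blast
  then obtain S1 Y1 \<alpha> \<beta> \<gamma> where s1: "S S1" "shift_up C T Y1" and d1: "Dist C S1 (Sh C W') Y1 \<alpha> \<beta> \<gamma>"
    unfolding ostar_def by blast
  obtain T1 where t1: "T T1" "iso_obj C (Sh C T1) Y1" using s1(2) unfolding shift_up_def by blast
  obtain X1 f1 h1 where d2: "Dist C X1 S1 (Sh C W') f1 \<alpha> h1" and i1: "iso_obj C Y1 (Sh C X1)"
    using rotback[OF d1] by blast
  obtain X2 f2 h2 where d3: "Dist C X2 X1 S1 f2 f1 h2" and i2: "iso_obj C (Sh C W') (Sh C X2)"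
    using rotback[OF d2] by blast
  have "iso_obj C T1 X1" using iso_obj_reflect iso_obj_trans[OF t1(2) i1] by blast
  then have tx1: "T X1" using subcat_iso[OF subT t1(1)] by blast
  have iw: "iso_obj C W' X2" using iso_obj_reflect[OF i2] .
  then obtain i where i: "is_iso C W' X2 i" unfolding iso_obj_def by blast
  have ux2: "U X2" using subcat_iso[OF subU uw iw] .
  have us1: "U S1" using S_sub_U[OF tw s1(1)] .
  have ux1: "U X1" using left_ext[OF cpU d3 ux2 us1] .
  obtain h' where d4: "Dist C P B X2 a (Comp C i b) h'" using transport[OF d i] by blast
  have d5: "Dist C B X2 (Sh C P) (Comp C i b) h' (Neg C (ShM C a))" by (rule rot[OF d4])
  have f2: "f2 \<in> Hom C X2 X1" using dist_tri[OF d3] by auto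
  have ib: "Comp C i b \<in> Hom C B X2" using i b comp_hom by (metis is_isoE)
  obtain Y' t w where d6: "Dist C B X1 Y' (Comp C f2 (Comp C i b)) t w"
    using tr1_ext[OF comp_hom[OF ib f2]] by blast
  obtain u v where "Dist C (Sh C P) Y' S1 u v (Comp C (ShM C h') h2)"
    using tr4[OF d5 d3 d6] by blast
  then have sy: "S Y'" using left_ext[OF cpS _ sp s1(1)] by blast
  obtain P' f' h'' where d7: "Dist C P' B X1 f' (Comp C f2 (Comp C i b)) h''" and i3: "iso_obj C Y' (Sh C P')"
    using rotback[OF d6] by blast
  have "S (Sh C P')" using subcat_iso[OF subS sy i3] .
  then show ?thesis unfolding Cminus_def ostar_def shift_down_def using d7 tx1 ux1 by blast
qed

lemma part1:
  assumes tw: "twin_cotorsion_pair C S T U V"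
    and d: "Dist C X A B x f y" and u: "U (Sh C X)" and m: "Cminus C S T U A"
  shows "Cminus C S T U B"
proof -
  have cpU: "cotorsion_pair C U V" using tw unfolding twin_cotorsion_pair_def by auto
  obtain P W p q r where sp: "S (Sh C P)" and w: "T W" "U W" and dp: "Dist C P A W p q r"
    using m unfolding Cminus_def ostar_def shift_down_def by blast
  have rd: "Dist C A B (Sh C X) f y (Neg C (ShM C x))" by (rule rot[OF d])
  have p: "p \<in> Hom C P A" using dist_tri[OF dp] by auto
  have f: "f \<in> Hom C A B" using dist_tri[OF d] by auto
  obtain W' t w where d2: "Dist C P B W' (Comp C f p) t w" using tr1_ext[OF comp_hom[OF p f]] by blast
  obtain u v where "Dist C W W' (Sh C X) u v (Comp C (ShM C q) (Neg C (ShM C x)))"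
    using tr4[OF dp rd d2] by blast
  then have "U W'" using left_ext[OF cpU _ w(2) u] by blast
  then show ?thesis using minus_of_U[OF tw d2 sp] by blast
qed

lemma part2:
  assumes tw: "twin_cotorsion_pair C S T U V"
    and d: "Dist C X A B x f y" and s: "S (Sh C X)" and m: "Cminus C S T U B"
  shows "Cminus C S T U A"
proof -
  have cpS: "cotorsion_pair C S T" using tw unfolding twin_cotorsion_pair_def by auto
  have subS: "subcat C S" using cpS unfolding cotorsion_pair_def by auto
  obtain P W p q r where sp: "S (Sh C P)" and w: "T W" "U W" and dp: "Dist C P B W p q r"
    using m unfolding Cminus_def ostar_def shift_down_def by blast
  have rd: "Dist C A B (Sh C X) f y (Neg C (ShM C x))" by (rule rot[OF d])
  have rdp: "Dist C B W (Sh C P) q r (Neg C (ShM C p))" by (rule rot[OF dp])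
  have q: "q \<in> Hom C B W" using dist_tri[OF dp] by auto
  have f: "f \<in> Hom C A B" using dist_tri[OF d] by auto
  obtain Y' t w where d2: "Dist C A W Y' (Comp C q f) t w" using tr1_ext[OF comp_hom[OF f q]] by blast
  obtain u v where "Dist C (Sh C X) Y' (Sh C P) u v (Comp C (ShM C y) (Neg C (ShM C p)))"
    using tr4[OF rd rdp d2] by blast
  then have sy: "S Y'" using left_ext[OF cpS _ s sp] by blast
  obtain P' f' h' where d3: "Dist C P' A W f' (Comp C q f) h'" and i: "iso_obj C Y' (Sh C P')"
    using rotback[OF d2] by blast
  have "S (Sh C P')" using subcat_iso[OF subS sy i] .
  then show ?thesis unfolding Cminus_def ostar_def shift_down_def using d3 w by blast
qed

end

theorem lemma2p12:
  fixes C :: "('o, 'm) tricat"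
    and S T U V :: "'o \<Rightarrow> bool"
  assumes "triangulated C"
    and "twin_cotorsion_pair C S T U V"
  shows "(\<forall>X A B x f y. Dist C X A B x f y \<longrightarrow> U (Sh C X) \<longrightarrow>
            Cminus C S T U A \<longrightarrow> Cminus C S T U B)
       \<and> (\<forall>X A B x f y. Dist C X A B x f y \<longrightarrow> S (Sh C X) \<longrightarrow>
            Cminus C S T U B \<longrightarrow> Cminus C S T U A)"
proof -
  interpret tri C by (rule tri.intro[OF assms(1)])
  show ?thesis using part1[OF assms(2)] part2[OF assms(2)] by blast
qed


end
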